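(* Let $a,b\in\mathbb{R}[\sin t,\cos t]$ be real trigonometric polynomials with $b$ having only simple zeroes, consider $x'=a(t)|x|+b(t)$, and let $u(t,x)$ denote its solution with $u(0,x)=x$. Let $-\infty=x_0<x_1<\dots<x_r<x_{r+1}=+\infty$ be real numbers such that for each $i\in\{0,\dots,r\}$ and each $x\in(x_i,x_{i+1})$ all zeroes of $t\in[0,2\pi]\mapsto u(t,x)$ are simple, and their number is constant for $x\in(x_i,x_{i+1})$. Let $u(t)$ be a $2\pi$-periodic solution with $u(0)\notin\{x_1,\dots,x_r\}$. Then $u$ has an even number of zeroes in a period, all simple. Moreover: \begin{enumerate} \item If $u(0)>x_r$, then $u(t)>0$ for every $t\in\mathbb{R}$, and if $u(0)<x_1$, then $u(t)<0$ for every $t\in\mathbb{R}$. \item Assume that $x_1,\dots,x_r$ are exactly the values at $t=0$ of the solutions having a non-simple zero. If $x_1<u(0)<x_r$, then $u$ has non-definite sign, i.e. it is strictly positive for some values of $t$ and strictly negative for some other values. \end{enumerate}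
   Context: A solution is periodic if $u(0)=u(2\pi)$. A zero $t_0$ of a solution is simple if the derivative of the solution at $t_0$ (equal to $b(t_0)$) is nonzero. *)

theory Defs
  imports "HOL-Analysis.Analysis"
begin

definition trig_poly :: "(real \<Rightarrow> real) \<Rightarrow> bool" where
  "trig_poly f \<longleftrightarrow> (\<exists>N (c :: nat \<Rightarrow> nat \<Rightarrow> real).
     \<forall>t. f t = (\<Sum>i\<le>N. \<Sum>j\<le>N. c i j * sin t ^ i * cos t ^ j))"

definition simple_zero :: "(real \<Rightarrow> real) \<Rightarrow> real \<Rightarrow> bool" where
  "simple_zero f t0 \<longleftrightarrow> f t0 = 0 \<and> deriv f t0 \<noteq> 0"

definition is_solution :: "(real \<Rightarrow> real) \<Rightarrow> (real \<Rightarrow> real) \<Rightarrow> (real \<Rightarrow> real) \<Rightarrow> bool" where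
  "is_solution a b v \<longleftrightarrow> (\<forall>t. (v has_real_derivative (a t * \<bar>v t\<bar> + b t)) (at t))"

text \<open>The i-th interval (x_i, x_{i+1}) for i = 0..r, with x_0 = -inf, x_{r+1} = +inf.\<close>
definition gap :: "(nat \<Rightarrow> real) \<Rightarrow> nat \<Rightarrow> nat \<Rightarrow> real set" where
  "gap xs r i = {x. (i = 0 \<or> xs i < x) \<and> (i = r \<or> x < xs (Suc i))}"

end

theory Submission
  imports Defs
begin


lemma trig_bound:
  assumes "trig_poly f" shows "\<exists>M>0. \<forall>t. \<bar>f t\<bar> \<le> M"
proof -
  obtain N c where h: "\<forall>t. f t = (\<Sum>i\<le>N. \<Sum>j\<le>N. c i j * sin t ^ i * cos t ^ j)"
    using assms unfolding trig_poly_def by blast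
  have "\<bar>f t\<bar> \<le> (\<Sum>i\<le>N. \<Sum>j\<le>N. \<bar>c i j\<bar>)" for t
  proof -
    have "\<bar>f t\<bar> \<le> (\<Sum>i\<le>N. \<bar>\<Sum>j\<le>N. c i j * sin t ^ i * cos t ^ j\<bar>)"
      unfolding h[rule_format] by (rule sum_abs)
    also have "\<dots> \<le> (\<Sum>i\<le>N. \<Sum>j\<le>N. \<bar>c i j * sin t ^ i * cos t ^ j\<bar>)"
      by (intro sum_mono sum_abs)
    also have "\<dots> \<le> (\<Sum>i\<le>N. \<Sum>j\<le>N. \<bar>c i j\<bar>)"
    proof (intro sum_mono)
      fix i j
      have "\<bar>sin t ^ i\<bar> \<le> 1" "\<bar>cos t ^ j\<bar> \<le> 1"
        by (simp_all add: power_abs power_le_one)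
      then show "\<bar>c i j * sin t ^ i * cos t ^ j\<bar> \<le> \<bar>c i j\<bar>"
      proof -
        have "\<bar>sin t ^ i\<bar> * \<bar>cos t ^ j\<bar> \<le> 1" using \<open>\<bar>sin t ^ i\<bar> \<le> 1\<close> \<open>\<bar>cos t ^ j\<bar> \<le> 1\<close>
          by (simp add: mult_le_one)
        then have "\<bar>c i j\<bar> * (\<bar>sin t ^ i\<bar> * \<bar>cos t ^ j\<bar>) \<le> \<bar>c i j\<bar>"
          by (simp add: mult_left_le)
        then show ?thesis by (simp add: abs_mult mult.assoc)
      qed
    qed
    finally show ?thesis .
  qed
  moreover have "(\<Sum>i\<le>N. \<Sum>j\<le>N. \<bar>c i j\<bar>) \<ge> 0" by (intro sum_nonneg) auto
  ultimately show ?thesis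
    by (intro exI[of _ "(\<Sum>i\<le>N. \<Sum>j\<le>N. \<bar>c i j\<bar>) + 1"]) (auto intro: order_trans[OF _ less_imp_le[OF less_add_one]])
qed

lemma trig_periodic:
  assumes "trig_poly f" shows "f (t + 2*pi) = f t"
  using assms unfolding trig_poly_def by (auto simp: sin_periodic cos_periodic)

lemma periodic_int:
  fixes f :: "real \<Rightarrow> 'b"
  assumes "\<And>t. f (t + p) = f t"
  shows "f (t + of_int n * p) = f t"
proof -
  have nat: "f (s + of_nat m * p) = f s" for s m
  proof (induction m)
    case (Suc m)
    have "f (s + of_nat (Suc m) * p) = f ((s + of_nat m * p) + p)" by (simp add: algebra_simps)
    then show ?case using Suc assms by simp
  qed simp
  show ?thesis
  proof (cases "n \<ge> 0")
    case True then show ?thesis using nat[of t "nat n"] by simp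
  next
    case False
    then have "f (t + of_int n * p + of_nat (nat (-n)) * p) = f (t + of_int n * p)"
      using nat by blast
    with False show ?thesis by simp
  qed
qed

lemma sol_simple_iff:
  assumes "is_solution a b w" shows "simple_zero w t \<longleftrightarrow> w t = 0 \<and> b t \<noteq> 0"
proof -
  have "deriv w t = a t * \<bar>w t\<bar> + b t"
    using assms DERIV_imp_deriv unfolding is_solution_def by blast
  then show ?thesis unfolding simple_zero_def by auto
qed

lemma deriv_sq_exp:
  assumes "(d has_real_derivative D) (at x)"
  shows "((\<lambda>t. d t ^ 2 * exp (c * t)) has_real_derivative (2 * d x * D + c * d x ^ 2) * exp (c * x)) (at x)"
  using assms by (auto intro!: derivative_eq_intros simp: algebra_simps power2_eq_square)

lemma sol_unique:
  assumes s1: "is_solution a b w1" and s2: "is_solution a b w2"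
    and A: "\<forall>t. \<bar>a t\<bar> \<le> A" and eq: "w1 s = w2 s"
  shows "w1 t = w2 t"
proof -
  define d where "d t = w1 t - w2 t" for t
  define D where "D t = a t * (\<bar>w1 t\<bar> - \<bar>w2 t\<bar>)" for t
  have dd: "(d has_real_derivative D t) (at t)" for t
  proof -
    have "((\<lambda>t. w1 t - w2 t) has_real_derivative (a t * \<bar>w1 t\<bar> + b t) - (a t * \<bar>w2 t\<bar> + b t)) (at t)"
      using s1 s2 unfolding is_solution_def by (intro DERIV_diff) auto
    then show ?thesis unfolding d_def[abs_def] D_def by (simp add: algebra_simps)
  qed
  have bnd: "d t * D t \<le> A * d t ^ 2 \<and> - (A * d t ^ 2) \<le> d t * D t" for t
  proof -
    have "\<bar>D t\<bar> \<le> A * \<bar>d t\<bar>"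
    proof -
      have "\<bar>D t\<bar> = \<bar>a t\<bar> * \<bar>\<bar>w1 t\<bar> - \<bar>w2 t\<bar>\<bar>" unfolding D_def by (simp add: abs_mult)
      also have "\<dots> \<le> A * \<bar>d t\<bar>" unfolding d_def
        using A by (intro mult_mono) (auto simp: abs_triangle_ineq3)
      finally show ?thesis .
    qed
    then have "\<bar>d t\<bar> * \<bar>D t\<bar> \<le> \<bar>d t\<bar> * (A * \<bar>d t\<bar>)" by (simp add: mult_left_mono)
    then have "\<bar>d t * D t\<bar> \<le> A * d t ^ 2" by (simp add: abs_mult power2_eq_square mult.commute mult.left_commute)
    then show ?thesis by (simp add: abs_le_iff)
  qed
  have d0: "d s = 0" using eq unfolding d_def by simp
  have "d t ^ 2 = 0"
  proof (cases "s \<le> t")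
    case True
    define g where "g t = d t ^ 2 * exp (- (2*A) * t)" for t
    have "g s \<ge> g t"
    proof (rule DERIV_nonpos_imp_nonincreasing[OF True])
      fix x
      have "(g has_real_derivative (2 * d x * D x + (- (2*A)) * d x ^ 2) * exp (- (2*A) * x)) (at x)"
        unfolding g_def[abs_def] by (rule deriv_sq_exp[OF dd])
      moreover have "(2 * d x * D x + (- (2*A)) * d x ^ 2) * exp (- (2*A) * x) \<le> 0"
        using bnd[of x] by (intro mult_nonpos_nonneg) auto
      ultimately show "\<exists>y. DERIV g x :> y \<and> y \<le> 0" by blast
    qed
    then show ?thesis unfolding g_def using d0 by (simp add: mult_le_0_iff)
  next
    case False
    define g where "g t = d t ^ 2 * exp ((2*A) * t)" for t
    have "g t \<le> g s"
    proof (rule DERIV_nonneg_imp_nondecreasing[of t s g])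
      show "t \<le> s" using False by simp
      fix x
      have "(g has_real_derivative (2 * d x * D x + (2*A) * d x ^ 2) * exp ((2*A) * x)) (at x)"
        unfolding g_def[abs_def] by (rule deriv_sq_exp[OF dd])
      moreover have "(2 * d x * D x + (2*A) * d x ^ 2) * exp ((2*A) * x) \<ge> 0"
        using bnd[of x] by (intro mult_nonneg_nonneg) auto
      ultimately show "\<exists>y. DERIV g x :> y \<and> y \<ge> 0" by blast
    qed
    then show ?thesis unfolding g_def using d0 by (simp add: mult_le_0_iff)
  qed
  then show ?thesis unfolding d_def by simp
qed


lemma sol_deriv: "is_solution a b w \<Longrightarrow> (w has_real_derivative (a t * \<bar>w t\<bar> + b t)) (at t)"
  unfolding is_solution_def by blast

lemma sol_cont: "is_solution a b w \<Longrightarrow> continuous_on S w"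
  by (meson DERIV_isCont continuous_at_imp_continuous_on sol_deriv)

lemma sol_strict:
  assumes s1: "is_solution a b w1" and s2: "is_solution a b w2"
    and A: "\<forall>t. \<bar>a t\<bar> \<le> A" and lt: "w1 0 < w2 0"
  shows "w1 t < w2 t"
proof (rule ccontr)
  assume "\<not> w1 t < w2 t"
  define d where "d s = w2 s - w1 s" for s
  have c: "continuous_on S d" for S unfolding d_def[abs_def]
    using sol_cont[OF s1] sol_cont[OF s2] by (intro continuous_intros)
  have "d t \<le> 0" "0 < d 0" using \<open>\<not> w1 t < w2 t\<close> lt unfolding d_def by auto
  then obtain s where "d s = 0"
  proof (cases "0 \<le> t")
    case True
    then show ?thesis using IVT2'[of d t 0 0, OF \<open>d t \<le> 0\<close> _ True c] \<open>0 < d 0\<close> that by force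
  next
    case False
    then show ?thesis using IVT'[of d t 0 0, OF \<open>d t \<le> 0\<close> _ _ c] \<open>0 < d 0\<close> that by force
  qed
  then have "w1 s = w2 s" unfolding d_def by simp
  then have "w1 0 = w2 0" using sol_unique[OF s1 s2 A] by blast
  with lt show False by simp
qed

lemma sol_shift:
  assumes "is_solution a b w" "trig_poly a" "trig_poly b"
  shows "is_solution a b (\<lambda>t. w (t + 2*pi))"
  unfolding is_solution_def
proof
  fix t
  have "(w has_real_derivative (a (t + 2*pi) * \<bar>w (t + 2*pi)\<bar> + b (t + 2*pi))) (at (t + 2*pi))"
    using sol_deriv[OF assms(1)] .
  then show "((\<lambda>t. w (t + 2*pi)) has_real_derivative a t * \<bar>w (t + 2*pi)\<bar> + b t) (at t)"
    using trig_periodic[OF assms(2)] trig_periodic[OF assms(3)] DERIV_shift[of w _ t "2*pi"] by simp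
qed

lemma sol_periodic:
  assumes "is_solution a b w" "trig_poly a" "trig_poly b" "w 0 = w (2*pi)"
  shows "w (t + 2*pi) = w t"
proof -
  obtain A where "\<forall>t. \<bar>a t\<bar> \<le> A" using trig_bound[OF assms(2)] by blast
  then show ?thesis using sol_unique[OF sol_shift[OF assms(1-3)] assms(1), of A 0 t] assms(4) by simp
qed

lemma deriv_ne_eventually:
  assumes "(f has_real_derivative D) (at z)" "f z = 0" "D \<noteq> 0"
  shows "eventually (\<lambda>y. f y * D > 0 \<and> y > z \<or> f y * D < 0 \<and> y < z) (at z)"
proof -
  have "((\<lambda>y. (f y - f z) / (y - z)) \<longlongrightarrow> D) (at z)"
    using assms(1) has_field_derivative_iff by blast
  then have "((\<lambda>y. (f y - f z) / (y - z) * D) \<longlongrightarrow> D * D) (at z)"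
    by (intro tendsto_intros)
  moreover have "D * D > 0" using assms(3) by (cases "D > 0") (auto simp: mult_neg_neg)
  ultimately have "eventually (\<lambda>y. (f y - f z) / (y - z) * D > 0) (at z)"
    using order_tendstoD(1) by blast
  moreover have "eventually (\<lambda>y. y \<noteq> z) (at z)" by (simp add: eventually_at_filter)
  ultimately show ?thesis
  proof (rule eventually_elim2)
    fix y assume h: "(f y - f z) / (y - z) * D > 0" "y \<noteq> z"
    then have "f y * D / (y - z) > 0" using assms(2) by (simp add: algebra_simps)
    then show "f y * D > 0 \<and> y > z \<or> f y * D < 0 \<and> y < z"
      using h(2) by (auto simp: zero_less_divide_iff)
  qed
qed

lemma finite_zeros:
  assumes d: "\<forall>t. (f has_real_derivative f' t) (at t)"
    and nz: "\<forall>t\<in>{p..q}. f t = 0 \<longrightarrow> f' t \<noteq> 0"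
  shows "finite {t\<in>{p..q}. f t = 0}"
proof -
  have "finite ({p..q} \<inter> {t. f t = 0})"
  proof (rule finite_not_islimpt_in_compact)
    fix z assume z: "z \<in> {p..q}"
    have "eventually (\<lambda>y. f y \<noteq> 0) (at z)"
    proof (cases "f z = 0")
      case True
      have "f' z \<noteq> 0" using nz z True by blast
      from deriv_ne_eventually[OF d[rule_format, of z] True this]
      show ?thesis by (rule eventually_mono) auto
    next
      case False
      have "(f \<longlongrightarrow> f z) (at z)" using d DERIV_isCont isCont_def by blast
      then show ?thesis using False tendsto_imp_eventually_ne by blast
    qed
    then show "\<not> z islimpt {t. f t = 0}" unfolding islimpt_iff_eventually by simp
  qed simp
  moreover have "{t\<in>{p..q}. f t = 0} = {p..q} \<inter> {t. f t = 0}" by blast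
  ultimately show ?thesis by simp
qed


lemma no_zero_same_sign:
  fixes f :: "real \<Rightarrow> real"
  assumes c: "continuous_on {\<alpha>..\<beta>} f" and le: "\<alpha> \<le> \<beta>" and nz: "\<forall>t\<in>{\<alpha>..\<beta>}. f t \<noteq> 0"
  shows "f \<alpha> > 0 \<longleftrightarrow> f \<beta> > 0"
proof -
  have "f \<alpha> \<noteq> 0" "f \<beta> \<noteq> 0" using nz le by auto
  show ?thesis
  proof (rule ccontr)
    assume h: "\<not> (f \<alpha> > 0 \<longleftrightarrow> f \<beta> > 0)"
    then have "(f \<beta> \<le> 0 \<and> 0 \<le> f \<alpha>) \<or> (f \<alpha> \<le> 0 \<and> 0 \<le> f \<beta>)" by auto
    then obtain x where "\<alpha> \<le> x" "x \<le> \<beta>" "f x = 0"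
      using IVT2'[OF _ _ le c, of 0] IVT'[OF _ _ le c, of 0] by blast
    then show False using nz by auto
  qed
qed

lemma crossing_parity:
  fixes f :: "real \<Rightarrow> real"
  assumes d: "\<forall>t. (f has_real_derivative f' t) (at t)"
  shows "card Z = n \<Longrightarrow> finite Z \<Longrightarrow> Z = {t. p < t \<and> t < q \<and> f t = 0} \<Longrightarrow> (\<forall>z\<in>Z. f' z \<noteq> 0)
     \<Longrightarrow> p < q \<Longrightarrow> f p \<noteq> 0 \<Longrightarrow> f q \<noteq> 0 \<Longrightarrow> (even n \<longleftrightarrow> (f p > 0 \<longleftrightarrow> f q > 0))"
proof (induction n arbitrary: Z p)
  have c: "continuous_on S f" for S
    using d by (meson DERIV_isCont continuous_at_imp_continuous_on)
  case 0
  then have "Z = {}" by simp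
  then have "\<forall>t\<in>{p..q}. f t \<noteq> 0" using 0 by (auto simp: less_eq_real_def)
  then show ?case using no_zero_same_sign[OF c, of p q] 0 by simp
next
  have c: "continuous_on S f" for S
    using d by (meson DERIV_isCont continuous_at_imp_continuous_on)
  case (Suc n)
  have ne: "Z \<noteq> {}" by (metis Suc.prems(1) card.empty Zero_not_Suc)
  define z where "z = Min Z"
  have zZ: "z \<in> Z" unfolding z_def using Min_in[OF Suc.prems(2) ne] .
  have zmin: "\<And>t. t \<in> Z \<Longrightarrow> z \<le> t" unfolding z_def using Min_le[OF Suc.prems(2)] by blast
  have pz: "p < z" "z < q" "f z = 0" using zZ Suc.prems(3) by blast+
  define D where "D = f' z"
  have D0: "D \<noteq> 0" using zZ Suc.prems(4) unfolding D_def by blast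
  have ev: "eventually (\<lambda>y. f y * D > 0 \<and> y > z \<or> f y * D < 0 \<and> y < z) (at z)"
    using deriv_ne_eventually[OF d[rule_format, of z] pz(3) D0[unfolded D_def]] unfolding D_def .
  have ltl: "eventually (\<lambda>y. y < z) (at_left z)"
    unfolding eventually_at_left_field using pz by (intro exI[of _ "z - 1"]) auto
  have gtr: "eventually (\<lambda>y. y > z) (at_right z)"
    unfolding eventually_at_right_field using pz by (intro exI[of _ "z + 1"]) auto
  have evl: "eventually (\<lambda>y. f y * D < 0) (at_left z)"
    using eventually_elim2[OF ev[unfolded eventually_at_split, THEN conjunct1] ltl] by auto
  have evr: "eventually (\<lambda>y. f y * D > 0) (at_right z)"
    using eventually_elim2[OF ev[unfolded eventually_at_split, THEN conjunct2] gtr] by auto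
  obtain b1 where b1: "b1 < z" "\<And>y. b1 < y \<Longrightarrow> y < z \<Longrightarrow> f y * D < 0"
    using evl unfolding eventually_at_left_field by blast
  define y1 where "y1 = (max b1 p + z) / 2"
  have y1: "p < y1" "y1 < z" "b1 < y1" using b1 pz unfolding y1_def by auto
  have "f y1 * D < 0" using b1 y1 by auto
  moreover have "f p > 0 \<longleftrightarrow> f y1 > 0"
  proof (rule no_zero_same_sign[OF c])
    show "p \<le> y1" using y1 by simp
    show "\<forall>t\<in>{p..y1}. f t \<noteq> 0"
    proof
      fix t assume t: "t \<in> {p..y1}"
      show "f t \<noteq> 0"
      proof
        assume "f t = 0"
        show False
        proof (cases "t = p")
          case True then show False using Suc.prems(6) \<open>f t = 0\<close> by simp
        next
          case False
          then have "t \<in> Z" using t y1 pz \<open>f t = 0\<close> Suc.prems(3) by auto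
          then show False using zmin t y1 by force
        qed
      qed
    qed
  qed
  ultimately have signp: "f p > 0 \<longleftrightarrow> D < 0"
    by (auto simp: mult_less_0_iff)
  define m where "m = Min (insert q (Z - {z}))"
  have fin2: "finite (insert q (Z - {z}))" using Suc.prems(2) by simp
  have mq: "m \<le> q" using fin2 m_def by simp
  have mZ: "\<And>t. t \<in> Z - {z} \<Longrightarrow> m \<le> t" using fin2 m_def by simp
  have zm: "z < m"
  proof -
    have "m \<in> insert q (Z - {z})" unfolding m_def using fin2 by (rule Min_in) simp
    then show ?thesis using pz zmin by (auto simp: less_le)
  qed
  obtain b2 where b2: "z < b2" "\<And>y. z < y \<Longrightarrow> y < b2 \<Longrightarrow> f y * D > 0"
    using evr unfolding eventually_at_right_field by blast
  define p' where "p' = (z + min b2 m) / 2"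
  have p': "z < p'" "p' < b2" "p' < m" using b2 zm unfolding p'_def by auto
  have fp': "f p' * D > 0" using b2 p' by auto
  define Z' where "Z' = Z - {z}"
  have Z'eq: "Z' = {t. p' < t \<and> t < q \<and> f t = 0}"
  proof
    show "Z' \<subseteq> {t. p' < t \<and> t < q \<and> f t = 0}"
      using mZ p' Suc.prems(3) unfolding Z'_def by force
    show "{t. p' < t \<and> t < q \<and> f t = 0} \<subseteq> Z'"
      using p' pz Suc.prems(3) unfolding Z'_def by auto
  qed
  have "even n \<longleftrightarrow> (f p' > 0 \<longleftrightarrow> f q > 0)"
  proof (rule Suc.IH[OF _ _ Z'eq])
    show "card Z' = n" using Suc.prems(1,2) zZ unfolding Z'_def by simp
    show "finite Z'" using Suc.prems(2) unfolding Z'_def by simp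
    show "\<forall>z\<in>Z'. f' z \<noteq> 0" using Suc.prems(4) unfolding Z'_def by simp
    show "p' < q" using p' mq by simp
    show "f p' \<noteq> 0" using fp' by auto
    show "f q \<noteq> 0" using Suc.prems(7) .
  qed
  moreover have "f p' > 0 \<longleftrightarrow> D > 0" using fp' by (auto simp: zero_less_mult_iff)
  ultimately show ?case using signp D0 by auto
qed


lemma stays_pos:
  assumes s: "is_solution a b w" and A: "\<forall>t. \<bar>a t\<bar> \<le> A" and B: "\<forall>t. \<bar>b t\<bar> \<le> B"
    and Apos: "A > 0" and w0: "w 0 > B / A * exp (2*pi*A)"
  shows "\<forall>t\<in>{0..2*pi}. w t > 0"
proof (rule ccontr)
  assume "\<not> (\<forall>t\<in>{0..2*pi}. w t > 0)"
  then obtain t1 where t1: "0 \<le> t1" "t1 \<le> 2*pi" "w t1 \<le> 0" by force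
  define C where "C = B / A"
  have B0: "B \<ge> 0" using B[rule_format, of 0] by simp
  have C0: "C \<ge> 0" using B0 Apos unfolding C_def by simp
  have AC: "A * C = B" using Apos unfolding C_def by simp
  have w0': "w 0 > C * exp (2*pi*A)" using w0 unfolding C_def .
  have wpos0: "w 0 > 0" using w0' C0 by (smt (verit, best) exp_gt_zero mult_nonneg_nonneg)
  have c: "continuous_on S w" for S using sol_cont[OF s] .
  define Z0 where "Z0 = {s\<in>{0..t1}. w s = 0}"
  have "Z0 \<noteq> {}" using IVT2'[of w t1 0 0, OF t1(3) _ t1(1) c] wpos0 unfolding Z0_def by force
  moreover have "bdd_below Z0" unfolding Z0_def by (rule bdd_belowI[of _ 0]) auto
  moreover have "closed Z0" unfolding Z0_def by (rule continuous_closed_preimage_constant[OF c]) simp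
  ultimately have t0Z: "Inf Z0 \<in> Z0" by (rule closed_contains_Inf)
  define t0 where "t0 = Inf Z0"
  have t0: "0 \<le> t0" "t0 \<le> t1" "w t0 = 0" using t0Z unfolding t0_def Z0_def by auto
  have nonneg: "w x \<ge> 0" if x: "0 \<le> x" "x \<le> t0" for x
  proof (rule ccontr)
    assume "\<not> w x \<ge> 0"
    then obtain y where y: "0 \<le> y" "y \<le> x" "w y = 0"
      using IVT2'[of w x 0 0, OF _ _ x(1) c] wpos0 by force
    then have "y \<in> Z0" unfolding Z0_def using x t0 by auto
    then have "t0 \<le> y" unfolding t0_def using \<open>bdd_below Z0\<close> by (rule cInf_lower)
    then have "y = x" using y x by simp
    then show False using \<open>\<not> w x \<ge> 0\<close> y by simp
  qed
  define g where "g s = (w s + C) * exp (A * s)" for s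
  have "g 0 \<le> g t0"
  proof (rule DERIV_nonneg_imp_nondecreasing[of 0 t0 g])
    show "0 \<le> t0" by fact
    fix x assume x: "0 \<le> x" "x \<le> t0"
    have "(g has_real_derivative (a x * \<bar>w x\<bar> + b x) * exp (A * x) + (w x + C) * (exp (A * x) * A)) (at x)"
      unfolding g_def[abs_def] using sol_deriv[OF s]
      by (auto intro!: derivative_eq_intros)
    moreover have "(a x * \<bar>w x\<bar> + b x) * exp (A * x) + (w x + C) * (exp (A * x) * A) \<ge> 0"
    proof -
      have wx: "w x \<ge> 0" using nonneg x by simp
      have "a x * \<bar>w x\<bar> \<ge> - A * w x"
      proof -
        have "\<bar>a x * \<bar>w x\<bar>\<bar> \<le> A * w x" using A wx by (simp add: abs_mult mult_right_mono)
        then show ?thesis by (simp add: abs_le_iff)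
      qed
      moreover have "b x \<ge> - B" using B[rule_format, of x] by simp
      ultimately have "a x * \<bar>w x\<bar> + b x + (w x + C) * A \<ge> 0" using AC by (simp add: algebra_simps)
      then have "exp (A * x) * (a x * \<bar>w x\<bar> + b x + (w x + C) * A) \<ge> 0" by simp
      then show ?thesis by (simp add: algebra_simps)
    qed
    ultimately show "\<exists>y. DERIV g x :> y \<and> y \<ge> 0" by blast
  qed
  then have "w 0 + C \<le> C * exp (A * t0)" unfolding g_def using t0(3) by simp
  also have "\<dots> \<le> C * exp (2*pi*A)"
    using C0 Apos t0 t1 by (intro mult_left_mono) (auto simp: mult.commute)
  finally show False using w0' C0 by simp
qed


lemma in_some_gap:
  assumes "x \<notin> xs ` {1..r}" "1 \<le> r"
  shows "\<exists>i\<le>r. x \<in> gap xs r i"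
proof -
  have n1: "x \<noteq> xs 1" and nr: "x \<noteq> xs r" using assms by auto
  consider "x < xs 1" | "xs r < x" | "xs 1 < x" "x < xs r" using n1 nr by force
  then show ?thesis
  proof cases
    case 1 then show ?thesis using assms(2) unfolding gap_def by (intro exI[of _ 0]) auto
  next
    case 2 then show ?thesis using assms(2) unfolding gap_def by (intro exI[of _ r]) auto
  next
    case 3
    define I where "I = {i\<in>{1..r}. xs i < x}"
    have fI: "finite I" unfolding I_def by simp
    have "1 \<in> I" unfolding I_def using 3 assms(2) by auto
    then have neI: "I \<noteq> {}" by blast
    define i where "i = Max I"
    have iI: "i \<in> I" unfolding i_def using Max_in[OF fI neI] .
    have imax: "\<And>j. j \<in> I \<Longrightarrow> j \<le> i" unfolding i_def using Max_ge[OF fI] by blast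
    have i1: "1 \<le> i" "i \<le> r" "xs i < x" using iI unfolding I_def by auto
    have "i \<noteq> r" using i1 3 by auto
    then have "Suc i \<in> {1..r}" using i1 by auto
    moreover have "Suc i \<notin> I" using imax by force
    ultimately have "xs (Suc i) \<ge> x" unfolding I_def by auto
    moreover have "xs (Suc i) \<noteq> x" using assms(1) \<open>Suc i \<in> {1..r}\<close> by force
    ultimately show ?thesis using i1 unfolding gap_def by (intro exI[of _ i]) auto
  qed
qed

lemma neg_solution:
  assumes "is_solution a b w"
  shows "is_solution (\<lambda>t. - a t) (\<lambda>t. - b t) (\<lambda>t. - w t)"
  unfolding is_solution_def
proof
  fix t
  have "((\<lambda>t. - w t) has_real_derivative - (a t * \<bar>w t\<bar> + b t)) (at t)"
    using sol_deriv[OF assms] by (rule DERIV_minus)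
  then show "((\<lambda>t. - w t) has_real_derivative - a t * \<bar>- w t\<bar> + - b t) (at t)" by simp
qed

lemma reduce_period:
  fixes t :: real
  obtains n :: int where "0 \<le> t + of_int n * (2*pi)" "t + of_int n * (2*pi) < 2*pi"
proof -
  define k where "k = \<lfloor>t / (2*pi)\<rfloor>"
  have "of_int k \<le> t / (2*pi)" "t / (2*pi) < of_int k + 1" unfolding k_def by linarith+
  then have "of_int k * (2*pi) \<le> t" "t < (of_int k + 1) * (2*pi)"
    by (simp_all add: field_simps)
  then show ?thesis using that[of "-k"] by (simp add: algebra_simps)
qed


theorem corollary3p2:
  fixes a b :: "real \<Rightarrow> real" and u :: "real \<Rightarrow> real \<Rightarrow> real"
    and xs :: "nat \<Rightarrow> real" and r :: nat and v :: "real \<Rightarrow> real"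
  assumes ta: "trig_poly a" and tb: "trig_poly b"
    and b_simple: "\<forall>t. b t = 0 \<longrightarrow> simple_zero b t"
    and u_sol: "\<forall>x. is_solution a b (\<lambda>t. u t x) \<and> u 0 x = x"
    and r_pos: "1 \<le> r"
    and xs_mono: "\<forall>i\<in>{1..<r}. xs i < xs (Suc i)"
    and gaps_simple: "\<forall>i\<le>r. \<forall>x\<in>gap xs r i. \<forall>t\<in>{0..2*pi}.
        u t x = 0 \<longrightarrow> simple_zero (\<lambda>s. u s x) t"
    and gaps_const: "\<forall>i\<le>r. \<exists>N. \<forall>x\<in>gap xs r i.
        card {t\<in>{0..2*pi}. u t x = 0} = N"
    and v_sol: "is_solution a b v" and v_per: "v 0 = v (2*pi)"
    and v0: "v 0 \<notin> xs ` {1..r}"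
  shows "finite {t\<in>{0..<2*pi}. v t = 0} \<and> even (card {t\<in>{0..<2*pi}. v t = 0})
       \<and> (\<forall>t. v t = 0 \<longrightarrow> simple_zero v t)
       \<and> (xs r < v 0 \<longrightarrow> (\<forall>t. v t > 0))
       \<and> (v 0 < xs 1 \<longrightarrow> (\<forall>t. v t < 0))
       \<and> (xs ` {1..r} = {x. \<exists>t\<in>{0..2*pi}. u t x = 0 \<and> \<not> simple_zero (\<lambda>s. u s x) t}
            \<longrightarrow> xs 1 < v 0 \<longrightarrow> v 0 < xs r \<longrightarrow> (\<exists>t. v t > 0) \<and> (\<exists>t. v t < 0))"
proof -
  obtain A where Apos: "A > 0" and A: "\<forall>t. \<bar>a t\<bar> \<le> A" using trig_bound[OF ta] by blast
  obtain B where Bpos: "B > 0" and B: "\<forall>t. \<bar>b t\<bar> \<le> B" using trig_bound[OF tb] by blast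
  have usol: "is_solution a b (\<lambda>t. u t x)" for x using u_sol by blast
  have u0: "u 0 x = x" for x using u_sol by blast
  have vU: "v t = u t (v 0)" for t
  proof -
    have "v 0 = u 0 (v 0)" using u0 by simp
    then show ?thesis using sol_unique[OF v_sol usol[of "v 0"] A, of 0 t] by simp
  qed
  have bper: "b (t + 2*pi) = b t" for t using trig_periodic[OF tb] .
  have vper: "v (t + 2*pi) = v t" for t using sol_periodic[OF v_sol ta tb v_per] .
  have red: "\<exists>t'\<in>{0..<2*pi}. v t' = v t \<and> b t' = b t" for t
  proof -
    obtain n :: int where n: "0 \<le> t + of_int n * (2*pi)" "t + of_int n * (2*pi) < 2*pi"
      using reduce_period by blast
    have "v (t + of_int n * (2*pi)) = v t" by (rule periodic_int) (rule vper)
    moreover have "b (t + of_int n * (2*pi)) = b t" by (rule periodic_int) (rule bper)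
    ultimately show ?thesis using n by (intro bexI[of _ "t + of_int n * (2*pi)"]) auto
  qed
  have gap_b: "b t \<noteq> 0" if "i \<le> r" "x \<in> gap xs r i" "t \<in> {0..2*pi}" "u t x = 0" for i x t
    using gaps_simple that sol_simple_iff[OF usol] by blast
  have gap_fin: "finite {t\<in>{0..2*pi}. u t x = 0}" if "i \<le> r" "x \<in> gap xs r i" for i x
  proof (rule finite_zeros)
    show "\<forall>t. ((\<lambda>t. u t x) has_real_derivative a t * \<bar>u t x\<bar> + b t) (at t)"
      using sol_deriv[OF usol] by blast
    show "\<forall>t\<in>{0..2*pi}. u t x = 0 \<longrightarrow> a t * \<bar>u t x\<bar> + b t \<noteq> 0"
      using gap_b[OF that] by simp
  qed
  obtain i where i: "i \<le> r" "v 0 \<in> gap xs r i" using in_some_gap[OF v0 r_pos] by blast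
  have vb: "b t \<noteq> 0" if "t \<in> {0..2*pi}" "v t = 0" for t
    using gap_b[OF i that(1)] that vU by metis
  have simple_all: "\<forall>t. v t = 0 \<longrightarrow> simple_zero v t"
  proof (intro allI impI)
    fix t assume "v t = 0"
    obtain t' where "t' \<in> {0..<2*pi}" "v t' = v t" "b t' = b t" using red by blast
    then have "b t \<noteq> 0" using vb[of t'] \<open>v t = 0\<close> by auto
    then show "simple_zero v t" using sol_simple_iff[OF v_sol] \<open>v t = 0\<close> by simp
  qed
  have vd: "\<forall>t. (v has_real_derivative a t * \<bar>v t\<bar> + b t) (at t)" using sol_deriv[OF v_sol] by blast
  have vfin2: "finite {t\<in>{0..2*pi}. v t = 0}"
    by (rule finite_zeros[OF vd]) (use vb in simp)
  have vfin: "finite {t\<in>{0..<2*pi}. v t = 0}"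
    by (rule finite_subset[OF _ vfin2]) auto
  have v2pi: "v (2*pi) = v 0" using v_per by simp
  have veven: "even (card {t\<in>{0..<2*pi}. v t = 0})"
  proof (cases "v 0 = 0")
    case False
    have eq: "{t\<in>{0..<2*pi}. v t = 0} = {t. 0 < t \<and> t < 2*pi \<and> v t = 0}"
      using False by (auto simp: less_eq_real_def)
    have "even (card {t\<in>{0..<2*pi}. v t = 0}) \<longleftrightarrow> (v 0 > 0 \<longleftrightarrow> v (2*pi) > 0)"
    proof (rule crossing_parity[OF vd refl vfin eq])
      show "\<forall>z\<in>{t \<in> {0..<2 * pi}. v t = 0}. a z * \<bar>v z\<bar> + b z \<noteq> 0" using vb by auto
    qed (use False v2pi in auto)
    then show ?thesis using v2pi by simp
  next
    case True
    define D where "D = b 0"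
    have D0: "D \<noteq> 0" using vb[of 0] True D_def by simp
    have d0: "(v has_real_derivative D) (at 0)" using vd True D_def by (metis abs_zero mult_zero_right add_0)
    have d2: "(v has_real_derivative D) (at (2*pi))" using vd True v2pi bper[of 0] D_def
      by (metis abs_zero mult_zero_right add_0 add_0)
    have e0: "eventually (\<lambda>y. v y * D > 0) (at_right 0)"
    proof -
      have "eventually (\<lambda>y. v y * D > 0 \<and> y > 0 \<or> v y * D < 0 \<and> y < 0) (at_right 0)"
        using deriv_ne_eventually[OF d0 True D0] unfolding eventually_at_split by blast
      moreover have "eventually (\<lambda>y. y > (0::real)) (at_right 0)"
        unfolding eventually_at_right_field by (intro exI[of _ 1]) auto
      ultimately show ?thesis by (rule eventually_elim2) auto
    qed
    have e2: "eventually (\<lambda>y. v y * D < 0) (at_left (2*pi))"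
    proof -
      have "eventually (\<lambda>y. v y * D > 0 \<and> y > 2*pi \<or> v y * D < 0 \<and> y < 2*pi) (at_left (2*pi))"
        using deriv_ne_eventually[OF d2 _ D0] True v2pi unfolding eventually_at_split by simp
      moreover have "eventually (\<lambda>y. y < 2*pi) (at_left (2*pi))"
        unfolding eventually_at_left_field by (intro exI[of _ 0]) auto
      ultimately show ?thesis by (rule eventually_elim2) auto
    qed
    obtain e1 where e1: "e1 > 0" "\<And>y. 0 < y \<Longrightarrow> y < e1 \<Longrightarrow> v y * D > 0"
      using e0 unfolding eventually_at_right_field by blast
    obtain e2 where e2: "e2 < 2*pi" "\<And>y. e2 < y \<Longrightarrow> y < 2*pi \<Longrightarrow> v y * D < 0"
      using e2 unfolding eventually_at_left_field by blast
    define \<epsilon> where "\<epsilon> = min (min e1 (2*pi - e2)) pi / 2"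
    have eps: "0 < \<epsilon>" "\<epsilon> < e1" "\<epsilon> < 2*pi - e2" "\<epsilon> < pi"
      using e1 e2 pi_gt_zero unfolding \<epsilon>_def by (auto simp: min_def)
    define Z' where "Z' = {t. \<epsilon> < t \<and> t < 2*pi - \<epsilon> \<and> v t = 0}"
    have vp: "v \<epsilon> * D > 0" using e1 eps by auto
    have vq: "v (2*pi - \<epsilon>) * D < 0" using e2 eps by auto
    have Zeq: "{t\<in>{0..<2*pi}. v t = 0} = insert 0 Z'"
    proof (intro equalityI subsetI)
      fix t assume t: "t \<in> {t\<in>{0..<2*pi}. v t = 0}"
      show "t \<in> insert 0 Z'"
      proof (cases "t = 0")
        case False
        then have "0 < t" "t < 2*pi" "v t = 0" using t by auto
        moreover have "\<not> t \<le> \<epsilon>" using e1(2)[of t] \<open>v t = 0\<close> \<open>0 < t\<close> eps by force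
        moreover have "\<not> t \<ge> 2*pi - \<epsilon>" using e2(2)[of t] \<open>v t = 0\<close> \<open>t < 2*pi\<close> eps by force
        ultimately show ?thesis unfolding Z'_def by auto
      qed simp
    next
      fix t assume "t \<in> insert 0 Z'"
      then show "t \<in> {t\<in>{0..<2*pi}. v t = 0}" using True eps unfolding Z'_def by auto
    qed
    have finZ': "finite Z'" using vfin Zeq by (metis finite_insert)
    have "0 \<notin> Z'" using eps unfolding Z'_def by auto
    then have cardZ: "card {t\<in>{0..<2*pi}. v t = 0} = Suc (card Z')" using Zeq finZ' by simp
    have "even (card Z') \<longleftrightarrow> (v \<epsilon> > 0 \<longleftrightarrow> v (2*pi - \<epsilon>) > 0)"
    proof (rule crossing_parity[OF vd refl finZ' Z'_def])
      show "\<forall>z\<in>Z'. a z * \<bar>v z\<bar> + b z \<noteq> 0" using vb eps unfolding Z'_def by auto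
      show "\<epsilon> < 2*pi - \<epsilon>" using eps by simp
      show "v \<epsilon> \<noteq> 0" using vp by auto
      show "v (2*pi - \<epsilon>) \<noteq> 0" using vq by auto
    qed
    moreover have "\<not> (v \<epsilon> > 0 \<longleftrightarrow> v (2*pi - \<epsilon>) > 0)"
      using vp vq by (auto simp: zero_less_mult_iff mult_less_0_iff)
    ultimately show ?thesis using cardZ by simp
  qed
  have gapr: "gap xs r r = {x. xs r < x}" using r_pos unfolding gap_def by auto
  have gap0: "gap xs r 0 = {x. x < xs 1}" using r_pos unfolding gap_def by auto
  have card_pos: "card {t\<in>{0..2*pi}. u t 0 = 0} \<noteq> 0" if "i \<le> r" "0 \<in> gap xs r i" for i
  proof -
    have "0 \<in> {t\<in>{0..2*pi}. u t 0 = 0}" using u0[of 0] by simp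
    then show ?thesis using gap_fin[OF that] by (metis card_0_eq empty_iff)
  qed
  have vnz: "\<forall>t\<in>{0..2*pi}. v t \<noteq> 0" if "i \<le> r" "v 0 \<in> gap xs r i"
     "card {t\<in>{0..2*pi}. u t (v 0) = 0} = 0" for i
  proof -
    have "{t\<in>{0..2*pi}. u t (v 0) = 0} = {}" using gap_fin[OF that(1,2)] that(3) by simp
    then show ?thesis using vU[symmetric] by auto
  qed
  have sign_all: "v t > 0 \<longleftrightarrow> v 0 > 0" if nz: "\<forall>t\<in>{0..2*pi}. v t \<noteq> 0" for t
  proof -
    obtain t' where t': "t' \<in> {0..<2*pi}" "v t' = v t" using red by blast
    have "v 0 > 0 \<longleftrightarrow> v t' > 0"
      by (rule no_zero_same_sign[OF sol_cont[OF v_sol]]) (use t' nz in auto)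
    then show ?thesis using t' by simp
  qed
  have part_r: "xs r < v 0 \<longrightarrow> (\<forall>t. v t > 0)"
  proof
    assume h: "xs r < v 0"
    define X where "X = max (xs r + 1) (B / A * exp (2*pi*A) + 1)"
    have Xg: "X \<in> gap xs r r" using gapr unfolding X_def by auto
    have "\<forall>t\<in>{0..2*pi}. u t X > 0"
      using stays_pos[OF usol A B Apos] u0[of X] unfolding X_def by simp
    then have "{t\<in>{0..2*pi}. u t X = 0} = {}" by force
    moreover obtain N where N: "\<forall>x\<in>gap xs r r. card {t\<in>{0..2*pi}. u t x = 0} = N"
      using gaps_const by blast
    ultimately have N0: "N = 0" using Xg by (metis card.empty)
    have vg: "v 0 \<in> gap xs r r" using gapr h by simp
    have "card {t\<in>{0..2*pi}. u t (v 0) = 0} = 0" using N N0 vg by blast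
    then have nz: "\<forall>t\<in>{0..2*pi}. v t \<noteq> 0" using vnz[OF order.refl vg] by blast
    have "v 0 > 0"
    proof (rule ccontr)
      assume "\<not> v 0 > 0"
      then have "v 0 < 0" using nz by force
      then have "0 \<in> gap xs r r" using gapr h by simp
      then have "card {t\<in>{0..2*pi}. u t 0 = 0} = 0" using N N0 by auto
      then show False using card_pos[OF order.refl \<open>0 \<in> gap xs r r\<close>] by simp
    qed
    then show "\<forall>t. v t > 0" using sign_all[OF nz] by blast
  qed
  have part_0: "v 0 < xs 1 \<longrightarrow> (\<forall>t. v t < 0)"
  proof
    assume h: "v 0 < xs 1"
    define X where "X = min (xs 1 - 1) (- (B / A * exp (2*pi*A)) - 1)"
    have Xg: "X \<in> gap xs r 0" using gap0 unfolding X_def by auto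
    have A': "\<forall>t. \<bar>- a t\<bar> \<le> A" and B': "\<forall>t. \<bar>- b t\<bar> \<le> B" using A B by auto
    have "\<forall>t\<in>{0..2*pi}. - u t X > 0"
      using stays_pos[OF neg_solution[OF usol] A' B' Apos] u0[of X] unfolding X_def by simp
    then have "{t\<in>{0..2*pi}. u t X = 0} = {}" by force
    moreover obtain N where N: "\<forall>x\<in>gap xs r 0. card {t\<in>{0..2*pi}. u t x = 0} = N"
      using gaps_const by blast
    ultimately have N0: "N = 0" using Xg by (metis card.empty)
    have vg: "v 0 \<in> gap xs r 0" using gap0 h by simp
    have "card {t\<in>{0..2*pi}. u t (v 0) = 0} = 0" using N N0 vg by blast
    then have nz: "\<forall>t\<in>{0..2*pi}. v t \<noteq> 0" using vnz[OF _ vg] by blast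
    have "v 0 < 0"
    proof (rule ccontr)
      assume "\<not> v 0 < 0"
      then have "v 0 > 0" using nz by force
      then have "0 \<in> gap xs r 0" using gap0 h by simp
      then have "card {t\<in>{0..2*pi}. u t 0 = 0} = 0" using N N0 by auto
      then show False using card_pos[of 0, OF _ \<open>0 \<in> gap xs r 0\<close>] by simp
    qed
    show "\<forall>t. v t < 0"
    proof
      fix t
      obtain t' where t': "t' \<in> {0..<2*pi}" "v t' = v t" using red by blast
      then have "v t \<noteq> 0" using nz by auto
      moreover have "\<not> v t > 0" using sign_all[OF nz, of t] \<open>v 0 < 0\<close> by simp
      ultimately show "v t < 0" by simp
    qed
  qed
  have part2: "xs ` {1..r} = {x. \<exists>t\<in>{0..2*pi}. u t x = 0 \<and> \<not> simple_zero (\<lambda>s. u s x) t}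
            \<longrightarrow> xs 1 < v 0 \<longrightarrow> v 0 < xs r \<longrightarrow> (\<exists>t. v t > 0) \<and> (\<exists>t. v t < 0)"
  proof (intro impI)
    assume H: "xs ` {1..r} = {x. \<exists>t\<in>{0..2*pi}. u t x = 0 \<and> \<not> simple_zero (\<lambda>s. u s x) t}"
      and h1: "xs 1 < v 0" and hr: "v 0 < xs r"
    have "xs r \<in> xs ` {1..r}" "xs 1 \<in> xs ` {1..r}" using r_pos by auto
    then obtain t1 t2 where t1: "u t1 (xs r) = 0" and t2: "u t2 (xs 1) = 0" using H by blast
    have "v t1 < u t1 (xs r)" by (rule sol_strict[OF v_sol usol A]) (use hr u0 in simp)
    moreover have "u t2 (xs 1) < v t2" by (rule sol_strict[OF usol v_sol A]) (use h1 u0 in simp)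
    ultimately show "(\<exists>t. v t > 0) \<and> (\<exists>t. v t < 0)" using t1 t2 by auto
  qed
  show ?thesis using vfin veven simple_all part_r part_0 part2 by blast
qed
end
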